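(* Every exact-repair regenerating code of type $(5,4,4)$ with parameters $(B,\alpha,\beta)$ satisfies \[ 5B\le 7\alpha+22\beta\;(=3B_1+2B_2-2\beta). \]
   Context: Fix integers $1\le k\le d\le n-1$. An exact-repair regenerating code of type $(n,k,d)$ with parameters $(B,\alpha,\beta)$ (nonnegative reals) is a collection of jointly distributed discrete random variables $M$, $W_j$ ($1\le j\le n$), $S_i^j$ ($1\le i,j\le n$, $i\neq j$) such that, with $H$ denoting Shannon entropy: $H(M)=B$; $H(W_j)=\alpha$ and $H(W_j\mid M)=0$ for all $j$; $H(M\mid W_J)=0$ for every $J\subseteq\{1,\dots,n\}$ with $|J|\ge k$; $H(S_i^j)=\beta$ and $H(S_i^j\mid W_i)=0$ for all $i\ne j$; and $H(W_j\mid S_I^j)=0$ for every $I\subseteq\{1,\dots,n\}\setminus\{j\}$ with $|I|\ge d$. Notation: for a set $J$, $W_J=(W_j)_{j\in J}$; $S_I^j=(S_i^j)_{i\in I}$. For $0\le q\le k$, $B_q=q\alpha+\binom{k-q}{2}\beta+(d+1-k)(k-q)\beta$; for $(n,k,d)=(5,4,4)$, $B_1=\alpha+6\beta$, $B_2=2\alpha+3\beta$. *)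

theory Defs
  imports "HOL-Probability.Probability"
begin

text \<open>Jointly distributed discrete random variables are modelled as functions on
  a common (discrete) probability space given by a pmf p.  Shannon entropy
  (base 2) takes values in ennreal, so that infinite entropy is allowed.\<close>

definition ent :: "'o pmf \<Rightarrow> ('o \<Rightarrow> 'x) \<Rightarrow> ennreal" where
  "ent p X = (\<integral>\<^sup>+ x. ennreal (- pmf (map_pmf X p) x * log 2 (pmf (map_pmf X p) x))
                 \<partial>count_space UNIV)"

definition cond_ent :: "'o pmf \<Rightarrow> ('o \<Rightarrow> 'x) \<Rightarrow> ('o \<Rightarrow> 'y) \<Rightarrow> ennreal" where
  "cond_ent p X Y = (\<integral>\<^sup>+ xy. ennreal (- pmf (map_pmf (\<lambda>w. (X w, Y w)) p) xy *
        log 2 (pmf (map_pmf (\<lambda>w. (X w, Y w)) p) xy / pmf (map_pmf Y p) (snd xy)))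
      \<partial>count_space UNIV)"

definition tup :: "nat set \<Rightarrow> (nat \<Rightarrow> 'o \<Rightarrow> 'x) \<Rightarrow> 'o \<Rightarrow> (nat \<Rightarrow> 'x)" where
  "tup I X = (\<lambda>w i. if i \<in> I then X i w else undefined)"

text \<open>Exact-repair regenerating code of type (n,k,d) with parameters (B,alpha,beta).
  Nodes are indexed by {1..n}; S i j is the random variable S_i^j (sent from i to j).\<close>
definition regen_code ::
  "nat \<Rightarrow> nat \<Rightarrow> nat \<Rightarrow> 'o pmf \<Rightarrow> ('o \<Rightarrow> 'm) \<Rightarrow> (nat \<Rightarrow> 'o \<Rightarrow> 'w)
   \<Rightarrow> (nat \<Rightarrow> nat \<Rightarrow> 'o \<Rightarrow> 's) \<Rightarrow> real \<Rightarrow> real \<Rightarrow> real \<Rightarrow> bool" where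
  "regen_code n k d p M W S B \<alpha> \<beta> \<longleftrightarrow>
     1 \<le> k \<and> k \<le> d \<and> d \<le> n - 1 \<and>
     B \<ge> 0 \<and> \<alpha> \<ge> 0 \<and> \<beta> \<ge> 0 \<and>
     ent p M = ennreal B \<and>
     (\<forall>j\<in>{1..n}. ent p (W j) = ennreal \<alpha> \<and> cond_ent p (W j) M = 0) \<and>
     (\<forall>J. J \<subseteq> {1..n} \<and> card J \<ge> k \<longrightarrow> cond_ent p M (tup J W) = 0) \<and>
     (\<forall>i\<in>{1..n}. \<forall>j\<in>{1..n}. i \<noteq> j \<longrightarrow>
        ent p (S i j) = ennreal \<beta> \<and> cond_ent p (S i j) (W i) = 0) \<and>
     (\<forall>j\<in>{1..n}. \<forall>I. I \<subseteq> {1..n} - {j} \<and> card I \<ge> d \<longrightarrow>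
        cond_ent p (W j) (tup I (\<lambda>i. S i j)) = 0)"

end

theory Submission
  imports Defs
begin

definition Pr :: "'o pmf \<Rightarrow> ('o \<Rightarrow> 'x) \<Rightarrow> 'o \<Rightarrow> real" where
  "Pr p X w = measure_pmf.prob p {w'. X w' = X w}"

definition Hx :: "'o pmf \<Rightarrow> ('o \<Rightarrow> 'x) \<Rightarrow> ennreal" where
  "Hx p X = (\<integral>\<^sup>+w. ennreal (- log 2 (Pr p X w)) \<partial>measure_pmf p)"

lemma Pr_pos: "w \<in> set_pmf p \<Longrightarrow> 0 < Pr p X w"
  unfolding Pr_def by (rule measure_pmf_posI) auto

lemma Pr_le1: "Pr p X w \<le> 1"
  unfolding Pr_def by simp

lemma ent_Hx: "ent p X = Hx p X"
proof -
  have "Hx p X = (\<integral>\<^sup>+w. (\<lambda>x. ennreal (- log 2 (pmf (map_pmf X p) x))) (X w) \<partial>measure_pmf p)"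
    unfolding Hx_def Pr_def pmf_map by (simp add: vimage_def)
  also have "\<dots> = (\<integral>\<^sup>+x. ennreal (- log 2 (pmf (map_pmf X p) x)) \<partial>measure_pmf (map_pmf X p))"
    by simp
  also have "\<dots> = (\<integral>\<^sup>+x. ennreal (pmf (map_pmf X p) x) * ennreal (- log 2 (pmf (map_pmf X p) x)) \<partial>count_space UNIV)"
    by (rule nn_integral_measure_pmf)
  also have "\<dots> = ent p X" unfolding ent_def
    by (intro nn_integral_cong) (simp add: ennreal_mult'[symmetric])
  finally show ?thesis by simp
qed

lemma Pr_cong:
  assumes "\<forall>w\<in>set_pmf p. \<forall>w'\<in>set_pmf p. (X w = X w') = (Y w = Y w')" "w \<in> set_pmf p"
  shows "Pr p X w = Pr p Y w"
proof -
  have "{w'. X w' = X w} \<inter> set_pmf p = {w'. Y w' = Y w} \<inter> set_pmf p" using assms by auto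
  then show ?thesis unfolding Pr_def by (metis measure_Int_set_pmf)
qed

lemma Hx_cong:
  assumes "\<forall>w\<in>set_pmf p. \<forall>w'\<in>set_pmf p. (X w = X w') = (Y w = Y w')"
  shows "Hx p X = Hx p Y"
  unfolding Hx_def
  by (intro nn_integral_cong_AE AE_pmfI) (simp add: Pr_cong[OF assms])

lemma Pr_mono:
  assumes "\<forall>w\<in>set_pmf p. \<forall>w'\<in>set_pmf p. Y w = Y w' \<longrightarrow> X w = X w'" "w \<in> set_pmf p"
  shows "Pr p Y w \<le> Pr p X w"
proof -
  have "{w'. Y w' = Y w} \<inter> set_pmf p \<subseteq> {w'. X w' = X w} \<inter> set_pmf p"
  proof
    fix w' assume "w' \<in> {w'. Y w' = Y w} \<inter> set_pmf p"
    then have "Y w' = Y w" "w' \<in> set_pmf p" by auto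
    then have "X w' = X w" using assms by metis
    then show "w' \<in> {w'. X w' = X w} \<inter> set_pmf p" using \<open>w' \<in> set_pmf p\<close> by simp
  qed
  then have "measure_pmf.prob p ({w'. Y w' = Y w} \<inter> set_pmf p) \<le> measure_pmf.prob p ({w'. X w' = X w} \<inter> set_pmf p)"
    by (rule measure_pmf.finite_measure_mono) simp
  then show ?thesis unfolding Pr_def by (simp add: measure_Int_set_pmf)
qed

lemma Hx_mono:
  assumes "\<forall>w\<in>set_pmf p. \<forall>w'\<in>set_pmf p. Y w = Y w' \<longrightarrow> X w = X w'"
  shows "Hx p X \<le> Hx p Y"
  unfolding Hx_def
proof (intro nn_integral_mono_AE AE_pmfI ennreal_leI)
  fix w assume w: "w \<in> set_pmf p"
  have "Pr p Y w \<le> Pr p X w" by (rule Pr_mono[OF assms w])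
  moreover have "0 < Pr p Y w" by (rule Pr_pos[OF w])
  ultimately show "- log 2 (Pr p X w) \<le> - log 2 (Pr p Y w)" by simp
qed

lemma measure_cond_pmf:
  assumes "set_pmf p \<inter> E \<noteq> {}"
  shows "measure_pmf.prob (cond_pmf p E) A = measure_pmf.prob p (E \<inter> A) / measure_pmf.prob p E"
proof -
  obtain x where "x \<in> set_pmf p" "x \<in> E" using assms by blast
  then have pos: "0 < measure_pmf.prob p E" by (rule measure_pmf_posI)
  have "emeasure (measure_pmf (cond_pmf p E)) A = emeasure (measure_pmf p) (E \<inter> A) / emeasure (measure_pmf p) E"
    using assms by (simp add: cond_pmf.rep_eq emeasure_uniform_measure)
  also have "\<dots> = ennreal (measure_pmf.prob p (E \<inter> A) / measure_pmf.prob p E)"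
    using pos by (simp add: measure_pmf.emeasure_eq_measure divide_ennreal)
  finally show ?thesis
    by (simp add: measure_pmf.emeasure_eq_measure)
qed



lemma inner_bound:
  fixes X :: "'o \<Rightarrow> 'x" and Y :: "'o \<Rightarrow> 'y" and Z :: "'o \<Rightarrow> 'z"
  assumes w0: "w0 \<in> set_pmf p"
  shows "(\<integral>\<^sup>+w'. ennreal (Pr p (\<lambda>w. (X w, Z w)) w' * Pr p (\<lambda>w. (Y w, Z w)) w' /
            (Pr p (\<lambda>w. (X w, Y w, Z w)) w' * Pr p Z w'))
          \<partial>measure_pmf (cond_pmf p {w'. X w0 = X w' \<and> Z w0 = Z w'})) \<le> 1"
proof -
  define E where "E = {w'. X w0 = X w' \<and> Z w0 = Z w'}"
  define Zv where "Zv = {w'. Z w' = Z w0}"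
  define K where "K = cond_pmf p E"
  define a0 where "a0 = measure_pmf.prob p E"
  define d0 where "d0 = measure_pmf.prob p Zv"
  define G1 where "G1 y = measure_pmf.prob p {w'. Y w' = y \<and> Z w' = Z w0}" for y
  define G2 where "G2 y = measure_pmf.prob p {w'. X w' = X w0 \<and> Y w' = y \<and> Z w' = Z w0}" for y
  define F where "F y = a0 * G1 y / (G2 y * d0)" for y
  have E0: "set_pmf p \<inter> E \<noteq> {}" using w0 by (auto simp: E_def)
  have Z0: "set_pmf p \<inter> Zv \<noteq> {}" using w0 by (auto simp: Zv_def)
  have a0pos: "0 < a0" unfolding a0_def by (rule measure_pmf_posI[OF w0]) (simp add: E_def)
  have d0pos: "0 < d0" unfolding d0_def by (rule measure_pmf_posI[OF w0]) (simp add: Zv_def)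
  have setK: "set_pmf K = set_pmf p \<inter> E" unfolding K_def using E0 by simp
  have gF: "ennreal (Pr p (\<lambda>w. (X w, Z w)) w' * Pr p (\<lambda>w. (Y w, Z w)) w' /
            (Pr p (\<lambda>w. (X w, Y w, Z w)) w' * Pr p Z w')) = ennreal (F (Y w'))"
    if "w' \<in> set_pmf K" for w'
  proof -
    from that have e: "X w' = X w0" "Z w' = Z w0" by (auto simp: setK E_def)
    have 1: "Pr p (\<lambda>w. (X w, Z w)) w' = a0"
      unfolding Pr_def a0_def E_def using e by (intro arg_cong[where f="measure_pmf.prob p"]) auto
    have 2: "Pr p Z w' = d0"
      unfolding Pr_def d0_def Zv_def using e by simp
    have 3: "Pr p (\<lambda>w. (Y w, Z w)) w' = G1 (Y w')"
      unfolding Pr_def G1_def using e by simp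
    have 4: "Pr p (\<lambda>w. (X w, Y w, Z w)) w' = G2 (Y w')"
      unfolding Pr_def G2_def using e by (intro arg_cong[where f="measure_pmf.prob p"]) auto
    show ?thesis unfolding 1 2 3 4 F_def by (simp add: mult.commute)
  qed
  have "(\<integral>\<^sup>+w'. ennreal (Pr p (\<lambda>w. (X w, Z w)) w' * Pr p (\<lambda>w. (Y w, Z w)) w' /
            (Pr p (\<lambda>w. (X w, Y w, Z w)) w' * Pr p Z w')) \<partial>measure_pmf K)
      = (\<integral>\<^sup>+w'. ennreal (F (Y w')) \<partial>measure_pmf K)"
    by (intro nn_integral_cong_AE AE_pmfI gF)
  also have "\<dots> = (\<integral>\<^sup>+y. ennreal (F y) \<partial>measure_pmf (map_pmf Y K))"
    by simp
  also have "\<dots> = (\<integral>\<^sup>+y. ennreal (pmf (map_pmf Y K) y) * ennreal (F y) \<partial>count_space UNIV)"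
    by (rule nn_integral_measure_pmf)
  also have "\<dots> \<le> (\<integral>\<^sup>+y. ennreal (pmf (map_pmf Y (cond_pmf p Zv)) y) \<partial>count_space UNIV)"
  proof (intro nn_integral_mono)
    fix y
    have pK: "pmf (map_pmf Y K) y = G2 y / a0"
    proof -
      have "pmf (map_pmf Y K) y = measure_pmf.prob p (E \<inter> Y -` {y}) / measure_pmf.prob p E"
        unfolding pmf_map K_def by (rule measure_cond_pmf[OF E0])
      also have "E \<inter> Y -` {y} = {w'. X w' = X w0 \<and> Y w' = y \<and> Z w' = Z w0}" by (auto simp: E_def)
      finally show ?thesis by (simp add: G2_def a0_def)
    qed
    have pZ: "pmf (map_pmf Y (cond_pmf p Zv)) y = G1 y / d0"
    proof -
      have "pmf (map_pmf Y (cond_pmf p Zv)) y = measure_pmf.prob p (Zv \<inter> Y -` {y}) / measure_pmf.prob p Zv"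
        unfolding pmf_map by (rule measure_cond_pmf[OF Z0])
      also have "Zv \<inter> Y -` {y} = {w'. Y w' = y \<and> Z w' = Z w0}" by (auto simp: Zv_def)
      finally show ?thesis by (simp add: G1_def d0_def)
    qed
    have G2nn: "0 \<le> G2 y" unfolding G2_def by simp
    have G1nn: "0 \<le> G1 y" unfolding G1_def by simp
    have "G2 y / a0 * F y \<le> G1 y / d0"
    proof (cases "G2 y = 0")
      case True then show ?thesis using G1nn d0pos by simp
    next
      case False then show ?thesis using a0pos d0pos unfolding F_def by (simp add: field_simps)
    qed
    then show "ennreal (pmf (map_pmf Y K) y) * ennreal (F y) \<le> ennreal (pmf (map_pmf Y (cond_pmf p Zv)) y)"
      unfolding pK pZ using G2nn a0pos by (simp add: ennreal_mult'[symmetric] ennreal_leI)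
  qed
  also have "\<dots> = 1"
    by (simp add: nn_integral_pmf)
  finally show ?thesis unfolding K_def E_def .
qed

lemma key_bound:
  fixes X :: "'o \<Rightarrow> 'x" and Y :: "'o \<Rightarrow> 'y" and Z :: "'o \<Rightarrow> 'z"
  shows "(\<integral>\<^sup>+w. ennreal (Pr p (\<lambda>w. (X w, Z w)) w * Pr p (\<lambda>w. (Y w, Z w)) w /
            (Pr p (\<lambda>w. (X w, Y w, Z w)) w * Pr p Z w)) \<partial>measure_pmf p) \<le> 1"
proof -
  define g where "g w' = ennreal (Pr p (\<lambda>w. (X w, Z w)) w' * Pr p (\<lambda>w. (Y w, Z w)) w' /
            (Pr p (\<lambda>w. (X w, Y w, Z w)) w' * Pr p Z w'))" for w'
  define K where "K w = cond_pmf p {w'. X w = X w' \<and> Z w = Z w'}" for w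
  have bind: "bind_pmf p K = p" unfolding K_def
  proof (rule bind_cond_pmf_cancel)
    fix x assume "x \<in> set_pmf p" then show "set_pmf p \<inter> {y. X x = X y \<and> Z x = Z y} \<noteq> {}" by blast
  next
    fix y assume "y \<in> set_pmf p" then show "set_pmf p \<inter> {x. X x = X y \<and> Z x = Z y} \<noteq> {}" by blast
  next
    fix x y assume "X x = X y \<and> Z x = Z y"
    then have "{y'. X x = X y' \<and> Z x = Z y'} = {x'. X x' = X y \<and> Z x' = Z y}" by auto
    then show "measure_pmf.prob p {y'. X x = X y' \<and> Z x = Z y'} = measure_pmf.prob p {x'. X x' = X y \<and> Z x' = Z y}"
      by simp
  qed
  have "(\<integral>\<^sup>+w. g w \<partial>measure_pmf p) = (\<integral>\<^sup>+w. g w \<partial>measure_pmf (bind_pmf p K))"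
    by (simp only: bind)
  also have "\<dots> = (\<integral>\<^sup>+w. (\<integral>\<^sup>+w'. g w' \<partial>measure_pmf (K w)) \<partial>measure_pmf p)"
    by (rule nn_integral_bind_pmf)
  also have "\<dots> \<le> (\<integral>\<^sup>+w. 1 \<partial>measure_pmf p)"
    by (intro nn_integral_mono_AE AE_pmfI) (unfold K_def g_def, rule inner_bound)
  also have "\<dots> = 1" by simp
  finally show ?thesis unfolding g_def .
qed

lemma submod:
  fixes X :: "'o \<Rightarrow> 'x" and Y :: "'o \<Rightarrow> 'y" and Z :: "'o \<Rightarrow> 'z"
  shows "Hx p (\<lambda>w. (X w, Y w, Z w)) + Hx p Z \<le> Hx p (\<lambda>w. (X w, Z w)) + Hx p (\<lambda>w. (Y w, Z w))"
proof -
  define c :: ennreal where "c = ennreal (1 / ln 2)"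
  define a where "a = Pr p (\<lambda>w. (X w, Z w))"
  define b where "b = Pr p (\<lambda>w. (Y w, Z w))"
  define e where "e = Pr p (\<lambda>w. (X w, Y w, Z w))"
  define d where "d = Pr p Z"
  have pw: "ennreal (- log 2 (e w)) + ennreal (- log 2 (d w)) + c \<le>
      ennreal (- log 2 (a w)) + ennreal (- log 2 (b w)) + c * ennreal (a w * b w / (e w * d w))"
    if w: "w \<in> set_pmf p" for w
  proof -
    have pa: "0 < a w" "a w \<le> 1" unfolding a_def using Pr_pos[OF w] Pr_le1 by auto
    have pb: "0 < b w" "b w \<le> 1" unfolding b_def using Pr_pos[OF w] Pr_le1 by auto
    have pe: "0 < e w" "e w \<le> 1" unfolding e_def using Pr_pos[OF w] Pr_le1 by auto
    have pd: "0 < d w" "d w \<le> 1" unfolding d_def using Pr_pos[OF w] Pr_le1 by auto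
    define t where "t = a w * b w / (e w * d w)"
    have tpos: "0 < t" unfolding t_def using pa pb pe pd by simp
    have l2: "0 < ln (2::real)" by simp
    have "ln t \<le> t - 1" by (rule ln_le_minus_one[OF tpos])
    then have lt: "log 2 t \<le> (t - 1) / ln 2" unfolding log_def using l2 by (simp add: divide_right_mono)
    have "log 2 t = log 2 (a w) + log 2 (b w) - log 2 (e w) - log 2 (d w)"
      unfolding t_def using pa pb pe pd by (simp add: log_mult log_divide)
    with lt have main: "- log 2 (e w) + - log 2 (d w) + 1 / ln 2 \<le> - log 2 (a w) + - log 2 (b w) + 1 / ln 2 * t"
      by (simp add: diff_divide_distrib)
    have nn: "0 \<le> - log 2 (a w)" "0 \<le> - log 2 (b w)" "0 \<le> - log 2 (e w)" "0 \<le> - log 2 (d w)"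
      using pa pb pe pd by simp_all
    have nn2: "0 \<le> 1 / ln (2::real)" "0 \<le> t" using tpos by simp_all
    have "ennreal (- log 2 (e w)) + ennreal (- log 2 (d w)) + c = ennreal (- log 2 (e w) + - log 2 (d w) + 1 / ln 2)"
      unfolding c_def by (metis add_nonneg_nonneg ennreal_plus nn(3) nn(4) nn2(1))
    also have "\<dots> \<le> ennreal (- log 2 (a w) + - log 2 (b w) + 1 / ln 2 * t)"
      by (rule ennreal_leI[OF main])
    also have "\<dots> = ennreal (- log 2 (a w)) + ennreal (- log 2 (b w)) + c * ennreal t"
      unfolding c_def by (metis add_nonneg_nonneg ennreal_plus ennreal_mult mult_nonneg_nonneg nn(1) nn(2) nn2)
    finally show ?thesis unfolding t_def .
  qed
  have "Hx p (\<lambda>w. (X w, Y w, Z w)) + Hx p Z + c =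
      (\<integral>\<^sup>+w. ennreal (- log 2 (e w)) + ennreal (- log 2 (d w)) + c \<partial>measure_pmf p)"
    unfolding Hx_def e_def d_def by (simp add: nn_integral_add)
  also have "\<dots> \<le> (\<integral>\<^sup>+w. ennreal (- log 2 (a w)) + ennreal (- log 2 (b w)) + c * ennreal (a w * b w / (e w * d w)) \<partial>measure_pmf p)"
    by (intro nn_integral_mono_AE AE_pmfI pw)
  also have "\<dots> = Hx p (\<lambda>w. (X w, Z w)) + Hx p (\<lambda>w. (Y w, Z w)) + c * (\<integral>\<^sup>+w. ennreal (a w * b w / (e w * d w)) \<partial>measure_pmf p)"
    unfolding Hx_def a_def b_def by (simp add: nn_integral_add nn_integral_cmult)
  also have "\<dots> \<le> Hx p (\<lambda>w. (X w, Z w)) + Hx p (\<lambda>w. (Y w, Z w)) + c * 1"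
    unfolding a_def b_def e_def d_def by (intro add_left_mono mult_left_mono key_bound) simp
  finally have "c + (Hx p (\<lambda>w. (X w, Y w, Z w)) + Hx p Z) \<le> c + (Hx p (\<lambda>w. (X w, Z w)) + Hx p (\<lambda>w. (Y w, Z w)))"
    by (simp add: ac_simps)
  moreover have "c \<noteq> \<infinity>" unfolding c_def by simp
  ultimately show ?thesis by (simp add: ennreal_add_left_cancel_le)
qed



lemma cond_ent_zero_dep:
  fixes X :: "'o \<Rightarrow> 'x" and Y :: "'o \<Rightarrow> 'y"
  assumes ce: "cond_ent p X Y = 0" and w: "w \<in> set_pmf p" and w': "w' \<in> set_pmf p" and eq: "Y w = Y w'"
  shows "X w = X w'"
proof (rule ccontr)
  assume ne: "X w \<noteq> X w'"
  define Q where "Q = pmf (map_pmf (\<lambda>w. (X w, Y w)) p)"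
  define P where "P = pmf (map_pmf Y p)"
  have "AE xy in count_space UNIV. ennreal (- Q xy * log 2 (Q xy / P (snd xy))) = 0"
    using ce unfolding cond_ent_def Q_def P_def by (subst (asm) nn_integral_0_iff_AE) auto
  then have "ennreal (- Q (X w, Y w) * log 2 (Q (X w, Y w) / P (Y w))) = 0"
    by (simp add: AE_count_space)
  then have le0: "- Q (X w, Y w) * log 2 (Q (X w, Y w) / P (Y w)) \<le> 0" using ennreal_eq_0_iff by blast
  define A where "A = {v. Y v = Y w}"
  define C where "C = {v. X v = X w \<and> Y v = Y w}"
  have QC: "Q (X w, Y w) = measure_pmf.prob p C" unfolding Q_def C_def pmf_map by (simp add: vimage_def)
  have PA: "P (Y w) = measure_pmf.prob p A" unfolding P_def A_def pmf_map by (simp add: vimage_def)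
  have CA: "C \<subseteq> A" unfolding C_def A_def by auto
  have Cpos: "0 < measure_pmf.prob p C" by (rule measure_pmf_posI[OF w]) (simp add: C_def)
  have CleA: "measure_pmf.prob p C \<le> measure_pmf.prob p A" by (rule measure_pmf.finite_measure_mono[OF CA]) simp
  have "0 \<le> log 2 (measure_pmf.prob p C / measure_pmf.prob p A)"
    using le0 Cpos unfolding QC PA by (simp add: zero_le_mult_iff)
  then have "1 \<le> measure_pmf.prob p C / measure_pmf.prob p A"
    using Cpos CleA by (simp add: zero_le_log_cancel_iff)
  then have "measure_pmf.prob p A \<le> measure_pmf.prob p C"
    using Cpos CleA by (simp add: le_divide_eq split: if_splits)
  then have "measure_pmf.prob p (A - C) = 0"
    using CleA by (simp add: measure_pmf.finite_measure_Diff[OF _ _ CA])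
  moreover have "0 < measure_pmf.prob p (A - C)"
    by (rule measure_pmf_posI[OF w']) (use eq ne in \<open>auto simp: A_def C_def\<close>)
  ultimately show False by simp
qed



datatype var = Wv nat | Sv nat nat

definition allvl :: "var list" where
  "allvl = [Wv 1, Wv 2, Wv 3, Wv 4, Wv 5,
    Sv 1 2, Sv 1 3, Sv 1 4, Sv 1 5, Sv 2 1, Sv 2 3, Sv 2 4, Sv 2 5,
    Sv 3 1, Sv 3 2, Sv 3 4, Sv 3 5, Sv 4 1, Sv 4 2, Sv 4 3, Sv 4 5,
    Sv 5 1, Sv 5 2, Sv 5 3, Sv 5 4]"

definition allv :: "var set" where "allv = set allvl"

lemma five: "{1..5::nat} = {1,2,3,4,5}" by auto

lemma allv_W: "Wv j \<in> allv \<longleftrightarrow> j \<in> {1..5}" unfolding allv_def allvl_def five by auto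
lemma allv_S: "Sv i j \<in> allv \<longleftrightarrow> i \<in> {1..5} \<and> j \<in> {1..5} \<and> i \<noteq> j" unfolding allv_def allvl_def five by auto
lemma allv_iff: "x \<in> allv \<longleftrightarrow> (case x of Wv j \<Rightarrow> j \<in> {1..5} | Sv i j \<Rightarrow> i \<in> {1..5} \<and> j \<in> {1..5} \<and> i \<noteq> j)"
  by (cases x) (simp_all only: allv_W allv_S var.case)

definition nW :: "var set \<Rightarrow> nat" where
  "nW V = length (filter (\<lambda>j. Wv j \<in> V) [1,2,3,4,5])"

definition rule :: "var \<Rightarrow> var set \<Rightarrow> bool" where
  "rule x V \<longleftrightarrow> (case x of Wv j \<Rightarrow> (\<forall>i\<in>set [1,2,3,4,5]. i = j \<or> Sv i j \<in> V) | Sv i j \<Rightarrow> Wv i \<in> V) \<or> 4 \<le> nW V"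

definition step :: "var set \<Rightarrow> var set" where
  "step V = set (filter (\<lambda>x. x \<in> V \<or> rule x V) allvl)"

definition clo :: "var set \<Rightarrow> var set" where
  "clo V = (step ^^ 3) V"

lemma clo_eq: "clo V = step (step (step V))" by (simp add: clo_def numeral_3_eq_3)

lemma step_allv: "step V \<subseteq> allv" unfolding step_def allv_def by auto

lemma step_mono: "V \<subseteq> allv \<Longrightarrow> V \<subseteq> step V" unfolding step_def allv_def by auto

lemma card_nW: "card {j \<in> {1..5}. Wv j \<in> V} = nW V"
proof -
  have e: "{j \<in> {1..5}. Wv j \<in> V} = set (filter (\<lambda>j. Wv j \<in> V) [1,2,3,4,5])" unfolding set_filter five by simp
  have "distinct (filter (\<lambda>j. Wv j \<in> V) [1::nat,2,3,4,5])" by simp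
  then show ?thesis unfolding nW_def e by (rule distinct_card)
qed

locale rc =
  fixes p :: "'o pmf" and M :: "'o \<Rightarrow> 'm" and W :: "nat \<Rightarrow> 'o \<Rightarrow> 'w"
    and S :: "nat \<Rightarrow> nat \<Rightarrow> 'o \<Rightarrow> 's" and B \<alpha> \<beta> :: real
  assumes R: "regen_code 5 4 4 p M W S B \<alpha> \<beta>"
begin

lemma R_W: "j \<in> {1..5} \<Longrightarrow> ent p (W j) = ennreal \<alpha> \<and> cond_ent p (W j) M = 0"
  using R[unfolded regen_code_def] by blast
lemma R_M: "J \<subseteq> {1..5} \<Longrightarrow> 4 \<le> card J \<Longrightarrow> cond_ent p M (tup J W) = 0"
  using R[unfolded regen_code_def] by blast
lemma R_S: "i \<in> {1..5} \<Longrightarrow> j \<in> {1..5} \<Longrightarrow> i \<noteq> j \<Longrightarrow> ent p (S i j) = ennreal \<beta> \<and> cond_ent p (S i j) (W i) = 0"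
  using R[unfolded regen_code_def] by blast
lemma R_rep: "j \<in> {1..5} \<Longrightarrow> I \<subseteq> {1..5} - {j} \<Longrightarrow> 4 \<le> card I \<Longrightarrow> cond_ent p (W j) (tup I (\<lambda>i. S i j)) = 0"
  using R[unfolded regen_code_def] by blast
lemma R_B: "ent p M = ennreal B" "0 \<le> B" "0 \<le> \<alpha>" "0 \<le> \<beta>"
  using R[unfolded regen_code_def] by blast+

definition val :: "var \<Rightarrow> 'o \<Rightarrow> 'w + 's" where
  "val x w = (case x of Wv j \<Rightarrow> Inl (W j w) | Sv i j \<Rightarrow> Inr (S i j w))"

definition JV :: "var set \<Rightarrow> 'o \<Rightarrow> var \<Rightarrow> 'w + 's" where
  "JV V w = (\<lambda>x. if x \<in> V then val x w else undefined)"

definition h :: "var set \<Rightarrow> ennreal" where "h V = Hx p (JV V)"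

definition dep :: "var set \<Rightarrow> var \<Rightarrow> bool" where
  "dep V x \<longleftrightarrow> (\<forall>w\<in>set_pmf p. \<forall>w'\<in>set_pmf p. JV V w = JV V w' \<longrightarrow> val x w = val x w')"

lemma JV_eq: "JV V w = JV V w' \<longleftrightarrow> (\<forall>x\<in>V. val x w = val x w')"
  unfolding JV_def fun_eq_iff by (metis (full_types))

lemma h_sub: "h (A \<union> C) + h (A \<inter> C) \<le> h A + h C"
proof -
  have s: "Hx p (\<lambda>w. (JV (A - C) w, JV (C - A) w, JV (A \<inter> C) w)) + Hx p (JV (A \<inter> C))
      \<le> Hx p (\<lambda>w. (JV (A - C) w, JV (A \<inter> C) w)) + Hx p (\<lambda>w. (JV (C - A) w, JV (A \<inter> C) w))"
    by (rule submod)
  have 1: "Hx p (\<lambda>w. (JV (A - C) w, JV (C - A) w, JV (A \<inter> C) w)) = h (A \<union> C)"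
    unfolding h_def by (rule Hx_cong) (auto simp: JV_eq)
  have 2: "Hx p (\<lambda>w. (JV (A - C) w, JV (A \<inter> C) w)) = h A"
    unfolding h_def by (rule Hx_cong) (auto simp: JV_eq)
  have 3: "Hx p (\<lambda>w. (JV (C - A) w, JV (A \<inter> C) w)) = h C"
    unfolding h_def by (rule Hx_cong) (auto simp: JV_eq)
  show ?thesis using s unfolding 1 2 3 h_def[symmetric] .
qed

lemma h_mono: "A \<subseteq> C \<Longrightarrow> h A \<le> h C"
  unfolding h_def by (rule Hx_mono) (auto simp: JV_eq)

lemma h_dep: "\<forall>x\<in>U. dep V x \<Longrightarrow> h (V \<union> U) = h V"
  unfolding h_def dep_def by (rule Hx_cong) (auto simp: JV_eq)

lemma dep_mem: "x \<in> V \<Longrightarrow> dep V x"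
  unfolding dep_def JV_eq by blast

lemma dep_trans:
  assumes d: "\<forall>u\<in>U. dep V u" and sub: "V \<subseteq> U" and dU: "dep U x"
  shows "dep V x"
  unfolding dep_def
proof (intro ballI impI)
  fix w w' assume w: "w \<in> set_pmf p" "w' \<in> set_pmf p" and eq: "JV V w = JV V w'"
  have "JV U w = JV U w'" unfolding JV_eq
  proof
    fix u assume "u \<in> U"
    then have "dep V u" using d by blast
    then show "val u w = val u w'" using w eq unfolding dep_def by blast
  qed
  then show "val x w = val x w'" using dU w unfolding dep_def by blast
qed

lemma dep_S:
  assumes ij: "i \<in> {1..5}" "j \<in> {1..5}" "i \<noteq> j" and d: "dep V (Wv i)"
  shows "dep V (Sv i j)"
  unfolding dep_def
proof (intro ballI impI)
  fix w w' assume w: "w \<in> set_pmf p" "w' \<in> set_pmf p" and eq: "JV V w = JV V w'"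
  have "val (Wv i) w = val (Wv i) w'" using d w eq unfolding dep_def by blast
  then have "W i w = W i w'" by (simp add: val_def)
  then have "S i j w = S i j w'" using cond_ent_zero_dep[OF conjunct2[OF R_S[OF ij]] w] by blast
  then show "val (Sv i j) w = val (Sv i j) w'" by (simp add: val_def)
qed

lemma dep_W:
  assumes j: "j \<in> {1..5}" and d: "\<forall>i\<in>{1..5} - {j}. dep V (Sv i j)"
  shows "dep V (Wv j)"
proof -
  have c: "card ({1..5::nat} - {j}) = 4" using j by (simp add: card_Diff_singleton)
  have ce: "cond_ent p (W j) (tup ({1..5} - {j}) (\<lambda>i. S i j)) = 0" by (rule R_rep[OF j]) (use c in auto)
  show ?thesis unfolding dep_def
  proof (intro ballI impI)
    fix w w' assume w: "w \<in> set_pmf p" "w' \<in> set_pmf p" and eq: "JV V w = JV V w'"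
    have all: "\<forall>i\<in>{1..5} - {j}. S i j w = S i j w'"
    proof
      fix i assume i: "i \<in> {1..5} - {j}"
      have "dep V (Sv i j)" using d i by blast
      then have "val (Sv i j) w = val (Sv i j) w'" using w eq unfolding dep_def by blast
      then show "S i j w = S i j w'" by (simp add: val_def)
    qed
    have "tup ({1..5} - {j}) (\<lambda>i. S i j) w = tup ({1..5} - {j}) (\<lambda>i. S i j) w'"
      unfolding tup_def by (rule ext) (use all in simp)
    then have "W j w = W j w'" by (rule cond_ent_zero_dep[OF ce w])
    then show "val (Wv j) w = val (Wv j) w'" by (simp add: val_def)
  qed
qed

lemma dep_all:
  assumes J: "J \<subseteq> {1..5}" "4 \<le> card J" and d: "\<forall>j\<in>J. dep V (Wv j)" and x: "x \<in> allv"
  shows "dep V x"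
  unfolding dep_def
proof (intro ballI impI)
  fix w w' assume w: "w \<in> set_pmf p" "w' \<in> set_pmf p" and eq: "JV V w = JV V w'"
  have all: "\<forall>j\<in>J. W j w = W j w'"
  proof
    fix j assume j: "j \<in> J"
    have "dep V (Wv j)" using d j by blast
    then have "val (Wv j) w = val (Wv j) w'" using w eq unfolding dep_def by blast
    then show "W j w = W j w'" by (simp add: val_def)
  qed
  have "tup J W w = tup J W w'"
    unfolding tup_def by (rule ext) (use all in simp)
  then have Meq: "M w = M w'" by (rule cond_ent_zero_dep[OF R_M[OF J] w])
  have Weq: "W j w = W j w'" if "j \<in> {1..5}" for j
    using R_W[OF that] cond_ent_zero_dep[of p "W j" M w w'] w Meq by simp
  show "val x w = val x w'"
  proof (cases x)
    case (Wv j) then show ?thesis using x Weq by (simp add: val_def allv_iff)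
  next
    case (Sv i j)
    then have ij: "i \<in> {1..5}" "j \<in> {1..5}" "i \<noteq> j" using x by (auto simp: allv_iff)
    show ?thesis using Sv R_S[OF ij] cond_ent_zero_dep[of p "S i j" "W i" w w'] w Weq[OF ij(1)] by (simp add: val_def)
  qed
qed

lemma step_dep:
  assumes V: "V \<subseteq> allv" and x: "x \<in> step V"
  shows "dep V x"
proof -
  have xa: "x \<in> allv" using x step_allv by blast
  have "x \<in> V \<or> rule x V" using x unfolding step_def by auto
  then show ?thesis
  proof
    assume "x \<in> V" then show ?thesis by (rule dep_mem)
  next
    assume r: "rule x V"
    show ?thesis
    proof (cases "4 \<le> nW V")
      case True
      show ?thesis
      proof (rule dep_all[OF _ _ _ xa])
        show "{j \<in> {1..5}. Wv j \<in> V} \<subseteq> {1..5}" by auto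
        show "4 \<le> card {j \<in> {1..5}. Wv j \<in> V}" using True card_nW by simp
        show "\<forall>j\<in>{j \<in> {1..5}. Wv j \<in> V}. dep V (Wv j)" by (auto intro: dep_mem)
      qed
    next
      case False
      then have r': "case x of Wv j \<Rightarrow> (\<forall>i\<in>set [1,2,3,4,5]. i = j \<or> Sv i j \<in> V) | Sv i j \<Rightarrow> Wv i \<in> V"
        using r unfolding rule_def by auto
      show ?thesis
      proof (cases x)
        case (Wv j)
        then have j: "j \<in> {1..5}" using xa by (simp add: allv_iff)
        show ?thesis unfolding Wv
        proof (rule dep_W[OF j])
          show "\<forall>i\<in>{1..5} - {j}. dep V (Sv i j)"
          proof
            fix i assume i: "i \<in> {1..5} - {j}"
            then have "i \<in> set [1,2,3,4,5]" "i \<noteq> j" by (auto simp: five)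
            then have "Sv i j \<in> V" using r' Wv by auto
            then show "dep V (Sv i j)" by (rule dep_mem)
          qed
        qed
      next
        case (Sv i j)
        then have ij: "i \<in> {1..5}" "j \<in> {1..5}" "i \<noteq> j" using xa by (auto simp: allv_iff)
        show ?thesis unfolding Sv using r' Sv by (auto intro: dep_S[OF ij] dep_mem)
      qed
    qed
  qed
qed

lemma iter_dep: "V \<subseteq> allv \<Longrightarrow> (\<forall>x\<in>(step ^^ n) V. dep V x) \<and> (step ^^ n) V \<subseteq> allv \<and> V \<subseteq> (step ^^ n) V"
proof (induction n)
  case 0 then show ?case by (auto intro: dep_mem)
next
  case (Suc n)
  let ?U = "(step ^^ n) V"
  have IH: "\<forall>x\<in>?U. dep V x" "?U \<subseteq> allv" "V \<subseteq> ?U" using Suc by auto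
  have "\<forall>x\<in>step ?U. dep V x"
    using IH step_dep[OF IH(2)] dep_trans[OF IH(1) IH(3)] by blast
  moreover have "step ?U \<subseteq> allv" by (rule step_allv)
  moreover have "V \<subseteq> step ?U" using IH step_mono[OF IH(2)] by blast
  ultimately show ?case by simp
qed

lemma h_clo: "V \<subseteq> allv \<Longrightarrow> U \<subseteq> clo V \<Longrightarrow> h U \<le> h V"
proof -
  assume V: "V \<subseteq> allv" and U: "U \<subseteq> clo V"
  have "\<forall>x\<in>U. dep V x" using iter_dep[OF V, of 3] U unfolding clo_def by blast
  then have "h (V \<union> U) = h V" by (rule h_dep)
  moreover have "h U \<le> h (V \<union> U)" by (rule h_mono) auto
  ultimately show ?thesis by simp
qed

lemma clo_allv: "clo V \<subseteq> allv"
proof -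
  have "(step ^^ Suc n) V \<subseteq> allv" for n using step_allv by simp
  then show ?thesis unfolding clo_def by (metis numeral_eq_Suc)
qed

end


context rc begin

lemma h_W: assumes j: "j \<in> {1..5}" shows "h {Wv j} = ennreal \<alpha>"
proof -
  have "h {Wv j} = Hx p (W j)" unfolding h_def by (rule Hx_cong) (simp add: JV_eq val_def)
  also have "\<dots> = ent p (W j)" by (simp add: ent_Hx)
  finally show ?thesis using R_W[OF j] by simp
qed

lemma h_S: assumes ij: "i \<in> {1..5}" "j \<in> {1..5}" "i \<noteq> j" shows "h {Sv i j} = ennreal \<beta>"
proof -
  have "h {Sv i j} = Hx p (S i j)" unfolding h_def by (rule Hx_cong) (simp add: JV_eq val_def)
  also have "\<dots> = ent p (S i j)" by (simp add: ent_Hx)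
  finally show ?thesis using R_S[OF ij] by simp
qed

lemma h_all: "h allv = ennreal B"
proof -
  have "h allv = Hx p M" unfolding h_def
  proof (rule Hx_cong, intro ballI)
    fix w w' assume w: "w \<in> set_pmf p" "w' \<in> set_pmf p"
    show "(JV allv w = JV allv w') = (M w = M w')"
    proof
      assume eq: "JV allv w = JV allv w'"
      have "\<forall>j\<in>{1..4}. W j w = W j w'"
      proof
        fix j :: nat assume j: "j \<in> {1..4}"
        then have "Wv j \<in> allv" by (simp add: allv_W)
        then have "val (Wv j) w = val (Wv j) w'" using eq unfolding JV_eq by blast
        then show "W j w = W j w'" by (simp add: val_def)
      qed
      then have "tup {1..4} W w = tup {1..4} W w'" unfolding tup_def by (intro ext) simp
      moreover have "cond_ent p M (tup {1..4} W) = 0" by (rule R_M) auto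
      ultimately show "M w = M w'" using cond_ent_zero_dep w by metis
    next
      assume Meq: "M w = M w'"
      have Weq: "W j w = W j w'" if "j \<in> {1..5}" for j
        using R_W[OF that] cond_ent_zero_dep[of p "W j" M w w'] w Meq by simp
      show "JV allv w = JV allv w'" unfolding JV_eq
      proof
        fix x assume x: "x \<in> allv"
        show "val x w = val x w'"
        proof (cases x)
          case (Wv j) then show ?thesis using x Weq by (simp add: val_def allv_W)
        next
          case (Sv i j)
          then have ij: "i \<in> {1..5}" "j \<in> {1..5}" "i \<noteq> j" using x by (auto simp: allv_S)
          show ?thesis using Sv cond_ent_zero_dep[OF conjunct2[OF R_S[OF ij]] w] Weq[OF ij(1)] by (simp add: val_def)
        qed
      qed
    qed
  qed
  also have "\<dots> = ent p M" by (simp add: ent_Hx)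
  finally show ?thesis using R_B by simp
qed

definition r :: "var set \<Rightarrow> real" where "r V = enn2real (h V)"

lemma h_r: assumes "V \<subseteq> allv" shows "h V = ennreal (r V)"
proof -
  have hle: "h V \<le> ennreal B" using h_mono[OF assms] h_all by simp
  have "h V < \<top>" by (rule le_less_trans[OF hle ennreal_less_top])
  then have "h V \<noteq> \<top>" by simp
  then show ?thesis unfolding r_def by (metis ennreal_enn2real less_top)
qed

lemma r_nn: "0 \<le> r V" unfolding r_def by simp

lemma sub_r:
  assumes X: "X \<subseteq> A \<inter> C" and U: "U \<subseteq> clo (A \<union> C)" and A: "A \<subseteq> allv" and C: "C \<subseteq> allv"
  shows "r U + r X \<le> r A + r C"
proof -
  have AC: "A \<union> C \<subseteq> allv" using A C by simp
  have "h U \<le> h (A \<union> C)" by (rule h_clo[OF AC U])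
  moreover have "h X \<le> h (A \<inter> C)" by (rule h_mono[OF X])
  ultimately have "h U + h X \<le> h (A \<union> C) + h (A \<inter> C)" by (rule add_mono)
  also have "\<dots> \<le> h A + h C" by (rule h_sub)
  finally have *: "h U + h X \<le> h A + h C" .
  have Ua: "U \<subseteq> allv" using U clo_allv by blast
  have Xa: "X \<subseteq> allv" using X A by blast
  have e1: "h U + h X = ennreal (r U + r X)" using h_r[OF Ua] h_r[OF Xa] by (metis ennreal_plus r_nn)
  have e2: "h A + h C = ennreal (r A + r C)" using h_r[OF A] h_r[OF C] by (metis ennreal_plus r_nn)
  have "ennreal (r U + r X) \<le> ennreal (r A + r C)" using * unfolding e1 e2 .
  then show ?thesis by (rule ennreal_le_iff[OF add_nonneg_nonneg[OF r_nn r_nn], THEN iffD1])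
qed

lemma mono_r:
  assumes X: "X \<subseteq> clo A" and A: "A \<subseteq> allv"
  shows "r X \<le> r A"
proof -
  have hh: "h X \<le> h A" by (rule h_clo[OF A X])
  have Xa: "X \<subseteq> allv" using X clo_allv by blast
  have "ennreal (r X) \<le> ennreal (r A)" using hh by (metis h_r[OF Xa] h_r[OF A])
  then show ?thesis by (rule ennreal_le_iff[OF r_nn, THEN iffD1])
qed

lemma r_W: "j \<in> {1..5} \<Longrightarrow> r {Wv j} = \<alpha>"
  unfolding r_def using h_W R_B by simp

lemma r_S: "i \<in> {1..5} \<Longrightarrow> j \<in> {1..5} \<Longrightarrow> i \<noteq> j \<Longrightarrow> r {Sv i j} = \<beta>"
  unfolding r_def using h_S R_B by simp

lemma r_all: "r allv = B"
  unfolding r_def using h_all R_B by simp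

end

context rc begin
lemma cert: "5 * B \<le> 7 * \<alpha> + 22 * \<beta>"
proof -
  have c0: "r {Wv 1, Sv 1 2, Sv 1 3, Sv 1 4, Sv 1 5, Sv 2 3} + r {} \<le> r {Wv 1, Sv 1 2, Sv 1 3, Sv 1 4, Sv 1 5} + r {Sv 2 3}"
    by (rule sub_r) (simp_all add: clo_eq step_def rule_def nW_def allv_def allvl_def)
  have c1: "r {Wv 2, Sv 1 4, Sv 2 1, Sv 2 3, Sv 2 4, Sv 2 5} + r {} \<le> r {Sv 1 4} + r {Wv 2, Sv 2 1, Sv 2 3, Sv 2 4, Sv 2 5}"
    by (rule sub_r) (simp_all add: clo_eq step_def rule_def nW_def allv_def allvl_def)
  have c2: "r {Wv 2, Sv 2 1, Sv 2 3, Sv 2 4, Sv 2 5, Sv 3 4} + r {} \<le> r {Sv 3 4} + r {Wv 2, Sv 2 1, Sv 2 3, Sv 2 4, Sv 2 5}"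
    by (rule sub_r) (simp_all add: clo_eq step_def rule_def nW_def allv_def allvl_def)
  have c3: "r {Wv 3, Sv 3 1, Sv 3 2, Sv 3 4, Sv 3 5, Sv 5 2} + r {} \<le> r {Sv 5 2} + r {Wv 3, Sv 3 1, Sv 3 2, Sv 3 4, Sv 3 5}"
    by (rule sub_r) (simp_all add: clo_eq step_def rule_def nW_def allv_def allvl_def)
  have c4: "r {Wv 3, Sv 3 1, Sv 3 2, Sv 3 4, Sv 3 5, Sv 5 4} + r {} \<le> r {Wv 3, Sv 3 1, Sv 3 2, Sv 3 4, Sv 3 5} + r {Sv 5 4}"
    by (rule sub_r) (simp_all add: clo_eq step_def rule_def nW_def allv_def allvl_def)
  have c5: "r {Wv 4, Sv 3 1, Sv 4 1, Sv 4 2, Sv 4 3, Sv 4 5} + r {} \<le> r {Wv 4, Sv 4 1, Sv 4 2, Sv 4 3, Sv 4 5} + r {Sv 3 1}"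
    by (rule sub_r) (simp_all add: clo_eq step_def rule_def nW_def allv_def allvl_def)
  have c6: "r {Wv 4, Sv 4 1, Sv 4 2, Sv 4 3, Sv 4 5, Sv 5 3} + r {} \<le> r {Sv 5 3} + r {Wv 4, Sv 4 1, Sv 4 2, Sv 4 3, Sv 4 5}"
    by (rule sub_r) (simp_all add: clo_eq step_def rule_def nW_def allv_def allvl_def)
  have c7: "r {Wv 5, Sv 1 4, Sv 5 1, Sv 5 2, Sv 5 3, Sv 5 4} + r {} \<le> r {Sv 1 4} + r {Wv 5, Sv 5 1, Sv 5 2, Sv 5 3, Sv 5 4}"
    by (rule sub_r) (simp_all add: clo_eq step_def rule_def nW_def allv_def allvl_def)
  have c8: "r {Wv 5, Sv 3 4, Sv 5 1, Sv 5 2, Sv 5 3, Sv 5 4} + r {} \<le> r {Sv 3 4} + r {Wv 5, Sv 5 1, Sv 5 2, Sv 5 3, Sv 5 4}"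
    by (rule sub_r) (simp_all add: clo_eq step_def rule_def nW_def allv_def allvl_def)
  have c9: "r {Sv 3 1, Sv 3 2} + r {} \<le> r {Sv 3 1} + r {Sv 3 2}"
    by (rule sub_r) (simp_all add: clo_eq step_def rule_def nW_def allv_def allvl_def)
  have c10: "r {Sv 2 5, Sv 5 3} + r {} \<le> r {Sv 5 3} + r {Sv 2 5}"
    by (rule sub_r) (simp_all add: clo_eq step_def rule_def nW_def allv_def allvl_def)
  have c11: "r {Sv 1 4, Sv 5 4} + r {} \<le> r {Sv 1 4} + r {Sv 5 4}"
    by (rule sub_r) (simp_all add: clo_eq step_def rule_def nW_def allv_def allvl_def)
  have c12: "r {Sv 2 1, Sv 5 1} + r {} \<le> r {Sv 5 1} + r {Sv 2 1}"
    by (rule sub_r) (simp_all add: clo_eq step_def rule_def nW_def allv_def allvl_def)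
  have c13: "r {Sv 2 3, Sv 5 3} + r {} \<le> r {Sv 2 3} + r {Sv 5 3}"
    by (rule sub_r) (simp_all add: clo_eq step_def rule_def nW_def allv_def allvl_def)
  have c14: "r {Sv 2 4, Sv 3 4} + r {} \<le> r {Sv 3 4} + r {Sv 2 4}"
    by (rule sub_r) (simp_all add: clo_eq step_def rule_def nW_def allv_def allvl_def)
  have c15: "r {Sv 2 4, Sv 5 4} + r {} \<le> r {Sv 5 4} + r {Sv 2 4}"
    by (rule sub_r) (simp_all add: clo_eq step_def rule_def nW_def allv_def allvl_def)
  have c16: "r {Sv 3 1, Sv 5 1} + r {} \<le> r {Sv 5 1} + r {Sv 3 1}"
    by (rule sub_r) (simp_all add: clo_eq step_def rule_def nW_def allv_def allvl_def)
  have c17: "r {Wv 1, Wv 4, Sv 1 2, Sv 1 3, Sv 1 4, Sv 1 5, Sv 2 3, Sv 4 1, Sv 4 2, Sv 4 3, Sv 4 5} + r {Wv 1, Sv 1 2, Sv 1 3, Sv 1 4, Sv 1 5} \<le> r {Wv 1, Sv 1 2, Sv 1 3, Sv 1 4, Sv 1 5, Sv 2 3} + r {Wv 1, Wv 4, Sv 1 2, Sv 1 3, Sv 1 4, Sv 1 5, Sv 4 1, Sv 4 2, Sv 4 3, Sv 4 5}"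
    by (rule sub_r) (simp_all add: clo_eq step_def rule_def nW_def allv_def allvl_def)
  have c18: "r {Wv 3, Wv 4, Sv 3 1, Sv 3 2, Sv 3 4, Sv 3 5, Sv 4 1, Sv 4 2, Sv 4 3, Sv 4 5, Sv 5 2} + r {Wv 3, Sv 3 1, Sv 3 2, Sv 3 4, Sv 3 5} \<le> r {Wv 3, Sv 3 1, Sv 3 2, Sv 3 4, Sv 3 5, Sv 5 2} + r {Wv 3, Wv 4, Sv 3 1, Sv 3 2, Sv 3 4, Sv 3 5, Sv 4 1, Sv 4 2, Sv 4 3, Sv 4 5}"
    by (rule sub_r) (simp_all add: clo_eq step_def rule_def nW_def allv_def allvl_def)
  have c19: "r {Wv 2, Wv 4, Sv 2 1, Sv 2 3, Sv 2 4, Sv 2 5, Sv 4 1, Sv 4 2, Sv 4 3, Sv 4 5, Sv 5 3} + r {Wv 4, Sv 4 1, Sv 4 2, Sv 4 3, Sv 4 5} \<le> r {Wv 2, Wv 4, Sv 2 1, Sv 2 3, Sv 2 4, Sv 2 5, Sv 4 1, Sv 4 2, Sv 4 3, Sv 4 5} + r {Wv 4, Sv 4 1, Sv 4 2, Sv 4 3, Sv 4 5, Sv 5 3}"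
    by (rule sub_r) (simp_all add: clo_eq step_def rule_def nW_def allv_def allvl_def)
  have c20: "r {Wv 2, Sv 1 4, Sv 2 1, Sv 2 3, Sv 2 4, Sv 2 5, Sv 3 4} + r {Wv 2, Sv 2 1, Sv 2 3, Sv 2 4, Sv 2 5} \<le> r {Wv 2, Sv 2 1, Sv 2 3, Sv 2 4, Sv 2 5, Sv 3 4} + r {Wv 2, Sv 1 4, Sv 2 1, Sv 2 3, Sv 2 4, Sv 2 5}"
    by (rule sub_r) (simp_all add: clo_eq step_def rule_def nW_def allv_def allvl_def)
  have c21: "r {Wv 5, Sv 1 4, Sv 2 4, Sv 5 1, Sv 5 2, Sv 5 3, Sv 5 4} + r {Wv 5, Sv 5 1, Sv 5 2, Sv 5 3, Sv 5 4} \<le> r {Wv 5, Sv 2 4, Sv 5 1, Sv 5 2, Sv 5 3, Sv 5 4} + r {Wv 5, Sv 1 4, Sv 5 1, Sv 5 2, Sv 5 3, Sv 5 4}"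
    by (rule sub_r) (simp_all add: clo_eq step_def rule_def nW_def allv_def allvl_def)
  have c22: "r {Wv 3, Wv 4, Sv 3 1, Sv 3 2, Sv 3 4, Sv 3 5, Sv 4 1, Sv 4 2, Sv 4 3, Sv 4 5, Sv 5 1, Sv 5 2} + r {Wv 3, Wv 4, Sv 3 1, Sv 3 2, Sv 3 4, Sv 3 5, Sv 4 1, Sv 4 2, Sv 4 3, Sv 4 5} \<le> r {Wv 3, Wv 4, Sv 3 1, Sv 3 2, Sv 3 4, Sv 3 5, Sv 4 1, Sv 4 2, Sv 4 3, Sv 4 5, Sv 5 2} + r {Wv 3, Wv 4, Sv 3 1, Sv 3 2, Sv 3 4, Sv 3 5, Sv 4 1, Sv 4 2, Sv 4 3, Sv 4 5, Sv 5 1}"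
    by (rule sub_r) (simp_all add: clo_eq step_def rule_def nW_def allv_def allvl_def)
  have c23: "r {Wv 2, Wv 4, Sv 2 1, Sv 2 3, Sv 2 4, Sv 2 5, Sv 3 1, Sv 4 1, Sv 4 2, Sv 4 3, Sv 4 5, Sv 5 3} + r {Wv 2, Wv 4, Sv 2 1, Sv 2 3, Sv 2 4, Sv 2 5, Sv 4 1, Sv 4 2, Sv 4 3, Sv 4 5} \<le> r {Wv 2, Wv 4, Sv 2 1, Sv 2 3, Sv 2 4, Sv 2 5, Sv 4 1, Sv 4 2, Sv 4 3, Sv 4 5, Sv 5 3} + r {Wv 2, Wv 4, Sv 2 1, Sv 2 3, Sv 2 4, Sv 2 5, Sv 3 1, Sv 4 1, Sv 4 2, Sv 4 3, Sv 4 5}"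
    by (rule sub_r) (simp_all add: clo_eq step_def rule_def nW_def allv_def allvl_def)
  have c24: "r {Wv 1, Wv 4, Sv 1 2, Sv 1 3, Sv 1 4, Sv 1 5, Sv 4 1, Sv 4 2, Sv 4 3, Sv 4 5} + r {Sv 1 4} \<le> r {Wv 1, Sv 1 2, Sv 1 3, Sv 1 4, Sv 1 5} + r {Wv 4, Sv 1 4, Sv 4 1, Sv 4 2, Sv 4 3, Sv 4 5}"
    by (rule sub_r) (simp_all add: clo_eq step_def rule_def nW_def allv_def allvl_def)
  have c25: "r {Wv 1, Sv 1 2, Sv 1 3, Sv 1 4, Sv 1 5, Sv 2 3, Sv 5 3} + r {Sv 2 3} \<le> r {Wv 1, Sv 1 2, Sv 1 3, Sv 1 4, Sv 1 5, Sv 2 3} + r {Sv 2 3, Sv 5 3}"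
    by (rule sub_r) (simp_all add: clo_eq step_def rule_def nW_def allv_def allvl_def)
  have c26: "r {Wv 4, Sv 3 1, Sv 4 1, Sv 4 2, Sv 4 3, Sv 4 5, Sv 5 1} + r {Sv 3 1} \<le> r {Sv 3 1, Sv 5 1} + r {Wv 4, Sv 3 1, Sv 4 1, Sv 4 2, Sv 4 3, Sv 4 5}"
    by (rule sub_r) (simp_all add: clo_eq step_def rule_def nW_def allv_def allvl_def)
  have c27: "r {Wv 5, Sv 2 4, Sv 3 4, Sv 5 1, Sv 5 2, Sv 5 3, Sv 5 4} + r {Sv 3 4} \<le> r {Sv 2 4, Sv 3 4} + r {Wv 5, Sv 3 4, Sv 5 1, Sv 5 2, Sv 5 3, Sv 5 4}"
    by (rule sub_r) (simp_all add: clo_eq step_def rule_def nW_def allv_def allvl_def)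
  have c28: "r {Wv 3, Sv 1 4, Sv 3 1, Sv 3 2, Sv 3 4, Sv 3 5, Sv 5 4} + r {Sv 5 4} \<le> r {Wv 3, Sv 3 1, Sv 3 2, Sv 3 4, Sv 3 5, Sv 5 4} + r {Sv 1 4, Sv 5 4}"
    by (rule sub_r) (simp_all add: clo_eq step_def rule_def nW_def allv_def allvl_def)
  have c29: "r {Sv 2 1, Sv 3 1, Sv 3 2} + r {Sv 3 1} \<le> r {Sv 2 1, Sv 3 1} + r {Sv 3 1, Sv 3 2}"
    by (rule sub_r) (simp_all add: clo_eq step_def rule_def nW_def allv_def allvl_def)
  have c30: "r {Sv 2 3, Sv 2 5, Sv 5 3} + r {Sv 5 3} \<le> r {Sv 2 3, Sv 5 3} + r {Sv 2 5, Sv 5 3}"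
    by (rule sub_r) (simp_all add: clo_eq step_def rule_def nW_def allv_def allvl_def)
  have c31: "r {Sv 1 4, Sv 3 4, Sv 5 4} + r {Sv 1 4} \<le> r {Sv 1 4, Sv 3 4} + r {Sv 1 4, Sv 5 4}"
    by (rule sub_r) (simp_all add: clo_eq step_def rule_def nW_def allv_def allvl_def)
  have c32: "r {Sv 2 1, Sv 3 1, Sv 5 1} + r {Sv 5 1} \<le> r {Sv 3 1, Sv 5 1} + r {Sv 2 1, Sv 5 1}"
    by (rule sub_r) (simp_all add: clo_eq step_def rule_def nW_def allv_def allvl_def)
  have c33: "r {Sv 1 4, Sv 2 4, Sv 5 4} + r {Sv 5 4} \<le> r {Sv 1 4, Sv 5 4} + r {Sv 2 4, Sv 5 4}"
    by (rule sub_r) (simp_all add: clo_eq step_def rule_def nW_def allv_def allvl_def)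
  have c34: "r {Wv 2, Wv 4, Sv 1 4, Sv 2 1, Sv 2 3, Sv 2 4, Sv 2 5, Sv 3 1, Sv 4 1, Sv 4 2, Sv 4 3, Sv 4 5} + r {Wv 4, Sv 1 4, Sv 4 1, Sv 4 2, Sv 4 3, Sv 4 5} \<le> r {Wv 2, Wv 4, Sv 1 4, Sv 2 1, Sv 2 3, Sv 2 4, Sv 2 5, Sv 4 1, Sv 4 2, Sv 4 3, Sv 4 5} + r {Wv 4, Sv 1 4, Sv 3 1, Sv 4 1, Sv 4 2, Sv 4 3, Sv 4 5}"
    by (rule sub_r) (simp_all add: clo_eq step_def rule_def nW_def allv_def allvl_def)
  have c35: "r {Wv 3, Wv 4, Sv 1 4, Sv 3 1, Sv 3 2, Sv 3 4, Sv 3 5, Sv 4 1, Sv 4 2, Sv 4 3, Sv 4 5, Sv 5 1} + r {Wv 4, Sv 1 4, Sv 4 1, Sv 4 2, Sv 4 3, Sv 4 5} \<le> r {Wv 3, Wv 4, Sv 1 4, Sv 3 1, Sv 3 2, Sv 3 4, Sv 3 5, Sv 4 1, Sv 4 2, Sv 4 3, Sv 4 5} + r {Wv 4, Sv 1 4, Sv 4 1, Sv 4 2, Sv 4 3, Sv 4 5, Sv 5 1}"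
    by (rule sub_r) (simp_all add: clo_eq step_def rule_def nW_def allv_def allvl_def)
  have c36: "r {Wv 1, Wv 3, Wv 4, Sv 1 2, Sv 1 3, Sv 1 4, Sv 1 5, Sv 2 3, Sv 3 1, Sv 3 2, Sv 3 4, Sv 3 5, Sv 4 1, Sv 4 2, Sv 4 3, Sv 4 5, Sv 5 3} + r {Wv 1, Sv 1 2, Sv 1 3, Sv 1 4, Sv 1 5, Sv 2 3} \<le> r {Wv 1, Sv 1 2, Sv 1 3, Sv 1 4, Sv 1 5, Sv 2 3, Sv 5 3} + r {Wv 1, Wv 4, Sv 1 2, Sv 1 3, Sv 1 4, Sv 1 5, Sv 2 3, Sv 4 1, Sv 4 2, Sv 4 3, Sv 4 5}"
    by (rule sub_r) (simp_all add: clo_eq step_def rule_def nW_def allv_def allvl_def)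
  have c37: "r {Wv 4, Wv 5, Sv 1 4, Sv 2 4, Sv 3 4, Sv 4 1, Sv 4 2, Sv 4 3, Sv 4 5, Sv 5 1, Sv 5 2, Sv 5 3, Sv 5 4} + r {Wv 5, Sv 2 4, Sv 5 1, Sv 5 2, Sv 5 3, Sv 5 4} \<le> r {Wv 5, Sv 2 4, Sv 3 4, Sv 5 1, Sv 5 2, Sv 5 3, Sv 5 4} + r {Wv 5, Sv 1 4, Sv 2 4, Sv 5 1, Sv 5 2, Sv 5 3, Sv 5 4}"
    by (rule sub_r) (simp_all add: clo_eq step_def rule_def nW_def allv_def allvl_def)
  have c38: "r {Wv 2, Wv 4, Sv 1 4, Sv 2 1, Sv 2 3, Sv 2 4, Sv 2 5, Sv 4 1, Sv 4 2, Sv 4 3, Sv 4 5} \<le> r {Wv 2, Wv 4, Sv 1 4, Sv 2 1, Sv 2 3, Sv 2 4, Sv 2 5, Sv 3 4, Sv 4 1, Sv 4 2, Sv 4 3, Sv 4 5}"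
    by (rule mono_r) (simp_all add: clo_eq step_def rule_def nW_def allv_def allvl_def)
  have c39: "r {Wv 3, Wv 4, Sv 1 4, Sv 3 1, Sv 3 2, Sv 3 4, Sv 3 5, Sv 4 1, Sv 4 2, Sv 4 3, Sv 4 5} \<le> r {Wv 3, Wv 4, Sv 1 4, Sv 2 4, Sv 3 1, Sv 3 2, Sv 3 4, Sv 3 5, Sv 4 1, Sv 4 2, Sv 4 3, Sv 4 5}"
    by (rule mono_r) (simp_all add: clo_eq step_def rule_def nW_def allv_def allvl_def)
  have c40: "r {Wv 4, Wv 5, Sv 1 4, Sv 4 1, Sv 4 2, Sv 4 3, Sv 4 5, Sv 5 1, Sv 5 2, Sv 5 3, Sv 5 4} \<le> r {Wv 4, Wv 5, Sv 1 4, Sv 2 4, Sv 4 1, Sv 4 2, Sv 4 3, Sv 4 5, Sv 5 1, Sv 5 2, Sv 5 3, Sv 5 4}"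
    by (rule mono_r) (simp_all add: clo_eq step_def rule_def nW_def allv_def allvl_def)
  have c41: "r {Wv 1, Wv 3, Wv 4, Sv 1 2, Sv 1 3, Sv 1 4, Sv 1 5, Sv 2 1, Sv 3 1, Sv 3 2, Sv 3 4, Sv 3 5, Sv 4 1, Sv 4 2, Sv 4 3, Sv 4 5, Sv 5 1} + r {Wv 4, Sv 1 4, Sv 3 1, Sv 4 1, Sv 4 2, Sv 4 3, Sv 4 5, Sv 5 1} \<le> r {Wv 3, Wv 4, Sv 1 4, Sv 3 1, Sv 3 2, Sv 3 4, Sv 3 5, Sv 4 1, Sv 4 2, Sv 4 3, Sv 4 5, Sv 5 1} + r {Wv 1, Wv 4, Sv 1 2, Sv 1 3, Sv 1 4, Sv 1 5, Sv 2 1, Sv 3 1, Sv 4 1, Sv 4 2, Sv 4 3, Sv 4 5, Sv 5 1}"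
    by (rule sub_r) (simp_all add: clo_eq step_def rule_def nW_def allv_def allvl_def)
  have c42: "r {Wv 1, Wv 4, Wv 5, Sv 1 2, Sv 1 3, Sv 1 4, Sv 1 5, Sv 2 1, Sv 3 1, Sv 4 1, Sv 4 2, Sv 4 3, Sv 4 5, Sv 5 1, Sv 5 2, Sv 5 3, Sv 5 4} + r {Wv 4, Sv 1 4, Sv 3 1, Sv 4 1, Sv 4 2, Sv 4 3, Sv 4 5, Sv 5 1} \<le> r {Wv 1, Wv 4, Sv 1 2, Sv 1 3, Sv 1 4, Sv 1 5, Sv 2 1, Sv 3 1, Sv 4 1, Sv 4 2, Sv 4 3, Sv 4 5, Sv 5 1} + r {Wv 4, Wv 5, Sv 1 4, Sv 3 1, Sv 4 1, Sv 4 2, Sv 4 3, Sv 4 5, Sv 5 1, Sv 5 2, Sv 5 3, Sv 5 4}"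
    by (rule sub_r) (simp_all add: clo_eq step_def rule_def nW_def allv_def allvl_def)
  have c43: "r allv + r {Wv 3, Wv 4, Sv 3 1, Sv 3 2, Sv 3 4, Sv 3 5, Sv 4 1, Sv 4 2, Sv 4 3, Sv 4 5, Sv 5 1} \<le> r {Wv 3, Wv 4, Sv 3 1, Sv 3 2, Sv 3 4, Sv 3 5, Sv 4 1, Sv 4 2, Sv 4 3, Sv 4 5, Sv 5 1, Sv 5 2} + r {Wv 1, Wv 3, Wv 4, Sv 1 2, Sv 1 3, Sv 1 4, Sv 1 5, Sv 2 1, Sv 3 1, Sv 3 2, Sv 3 4, Sv 3 5, Sv 4 1, Sv 4 2, Sv 4 3, Sv 4 5, Sv 5 1}"
    by (rule sub_r) (simp_all add: clo_eq step_def rule_def nW_def allv_def allvl_def)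
  have c44: "r allv + r {Wv 2, Wv 4, Sv 2 1, Sv 2 3, Sv 2 4, Sv 2 5, Sv 3 1, Sv 4 1, Sv 4 2, Sv 4 3, Sv 4 5} \<le> r {Wv 1, Wv 2, Wv 4, Sv 1 2, Sv 1 3, Sv 1 4, Sv 1 5, Sv 2 1, Sv 2 3, Sv 2 4, Sv 2 5, Sv 3 1, Sv 4 1, Sv 4 2, Sv 4 3, Sv 4 5, Sv 5 1} + r {Wv 2, Wv 4, Sv 2 1, Sv 2 3, Sv 2 4, Sv 2 5, Sv 3 1, Sv 4 1, Sv 4 2, Sv 4 3, Sv 4 5, Sv 5 3}"
    by (rule sub_r) (simp_all add: clo_eq step_def rule_def nW_def allv_def allvl_def)
  have c45: "r {Wv 4, Wv 5, Sv 1 4, Sv 3 1, Sv 4 1, Sv 4 2, Sv 4 3, Sv 4 5, Sv 5 1, Sv 5 2, Sv 5 3, Sv 5 4} + r {Wv 4, Sv 1 4, Sv 4 1, Sv 4 2, Sv 4 3, Sv 4 5, Sv 5 1} \<le> r {Wv 4, Wv 5, Sv 1 4, Sv 4 1, Sv 4 2, Sv 4 3, Sv 4 5, Sv 5 1, Sv 5 2, Sv 5 3, Sv 5 4} + r {Wv 4, Sv 1 4, Sv 3 1, Sv 4 1, Sv 4 2, Sv 4 3, Sv 4 5, Sv 5 1}"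
    by (rule sub_r) (simp_all add: clo_eq step_def rule_def nW_def allv_def allvl_def)
  have c46: "r {Wv 1, Wv 2, Wv 4, Sv 1 2, Sv 1 3, Sv 1 4, Sv 1 5, Sv 2 1, Sv 2 3, Sv 2 4, Sv 2 5, Sv 3 1, Sv 4 1, Sv 4 2, Sv 4 3, Sv 4 5, Sv 5 1} + r {Wv 4, Sv 1 4, Sv 3 1, Sv 4 1, Sv 4 2, Sv 4 3, Sv 4 5} \<le> r {Wv 2, Wv 4, Sv 1 4, Sv 2 1, Sv 2 3, Sv 2 4, Sv 2 5, Sv 3 1, Sv 4 1, Sv 4 2, Sv 4 3, Sv 4 5} + r {Wv 4, Sv 1 4, Sv 3 1, Sv 4 1, Sv 4 2, Sv 4 3, Sv 4 5, Sv 5 1}"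
    by (rule sub_r) (simp_all add: clo_eq step_def rule_def nW_def allv_def allvl_def)
  have c47: "r allv + r {Wv 4, Sv 2 3, Sv 4 1, Sv 4 2, Sv 4 3, Sv 4 5, Sv 5 3} \<le> r {Wv 4, Sv 2 3, Sv 2 5, Sv 4 1, Sv 4 2, Sv 4 3, Sv 4 5, Sv 5 3} + r {Wv 1, Wv 3, Wv 4, Sv 1 2, Sv 1 3, Sv 1 4, Sv 1 5, Sv 2 3, Sv 3 1, Sv 3 2, Sv 3 4, Sv 3 5, Sv 4 1, Sv 4 2, Sv 4 3, Sv 4 5, Sv 5 3}"
    by (rule sub_r) (simp_all add: clo_eq step_def rule_def nW_def allv_def allvl_def)
  have c48: "r allv + r {Wv 4, Sv 2 1, Sv 3 1, Sv 4 1, Sv 4 2, Sv 4 3, Sv 4 5} \<le> r {Wv 1, Wv 4, Wv 5, Sv 1 2, Sv 1 3, Sv 1 4, Sv 1 5, Sv 2 1, Sv 3 1, Sv 4 1, Sv 4 2, Sv 4 3, Sv 4 5, Sv 5 1, Sv 5 2, Sv 5 3, Sv 5 4} + r {Wv 4, Sv 2 1, Sv 3 1, Sv 3 2, Sv 4 1, Sv 4 2, Sv 4 3, Sv 4 5}"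
    by (rule sub_r) (simp_all add: clo_eq step_def rule_def nW_def allv_def allvl_def)
  have c49: "r {Wv 2, Wv 4, Sv 1 4, Sv 2 1, Sv 2 3, Sv 2 4, Sv 2 5, Sv 3 4, Sv 4 1, Sv 4 2, Sv 4 3, Sv 4 5} \<le> r {Wv 2, Wv 4, Sv 1 4, Sv 2 1, Sv 2 3, Sv 2 4, Sv 2 5, Sv 3 4, Sv 4 1, Sv 4 2, Sv 4 3, Sv 4 5, Sv 5 4}"
    by (rule mono_r) (simp_all add: clo_eq step_def rule_def nW_def allv_def allvl_def)
  have c50: "r {Wv 3, Wv 4, Sv 1 4, Sv 2 4, Sv 3 1, Sv 3 2, Sv 3 4, Sv 3 5, Sv 4 1, Sv 4 2, Sv 4 3, Sv 4 5} \<le> r {Wv 3, Wv 4, Sv 1 4, Sv 2 4, Sv 3 1, Sv 3 2, Sv 3 4, Sv 3 5, Sv 4 1, Sv 4 2, Sv 4 3, Sv 4 5, Sv 5 4}"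
    by (rule mono_r) (simp_all add: clo_eq step_def rule_def nW_def allv_def allvl_def)
  have c51: "r {Wv 4, Wv 5, Sv 1 4, Sv 2 4, Sv 4 1, Sv 4 2, Sv 4 3, Sv 4 5, Sv 5 1, Sv 5 2, Sv 5 3, Sv 5 4} \<le> r {Wv 4, Wv 5, Sv 1 4, Sv 2 4, Sv 3 4, Sv 4 1, Sv 4 2, Sv 4 3, Sv 4 5, Sv 5 1, Sv 5 2, Sv 5 3, Sv 5 4}"
    by (rule mono_r) (simp_all add: clo_eq step_def rule_def nW_def allv_def allvl_def)
  have c52: "r {Wv 4, Sv 2 3, Sv 2 5, Sv 4 1, Sv 4 2, Sv 4 3, Sv 4 5, Sv 5 3} + r {Sv 2 3, Sv 5 3} \<le> r {Sv 2 3, Sv 2 5, Sv 5 3} + r {Wv 4, Sv 2 3, Sv 4 1, Sv 4 2, Sv 4 3, Sv 4 5, Sv 5 3}"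
    by (rule sub_r) (simp_all add: clo_eq step_def rule_def nW_def allv_def allvl_def)
  have c53: "r {Wv 4, Sv 2 1, Sv 3 1, Sv 3 2, Sv 4 1, Sv 4 2, Sv 4 3, Sv 4 5} + r {Sv 2 1, Sv 3 1} \<le> r {Sv 2 1, Sv 3 1, Sv 3 2} + r {Wv 4, Sv 2 1, Sv 3 1, Sv 4 1, Sv 4 2, Sv 4 3, Sv 4 5}"
    by (rule sub_r) (simp_all add: clo_eq step_def rule_def nW_def allv_def allvl_def)
  have c54: "r {Wv 2, Wv 4, Sv 1 4, Sv 2 1, Sv 2 3, Sv 2 4, Sv 2 5, Sv 3 4, Sv 4 1, Sv 4 2, Sv 4 3, Sv 4 5, Sv 5 4} + r {Sv 1 4, Sv 3 4} \<le> r {Sv 1 4, Sv 3 4, Sv 5 4} + r {Wv 2, Sv 1 4, Sv 2 1, Sv 2 3, Sv 2 4, Sv 2 5, Sv 3 4}"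
    by (rule sub_r) (simp_all add: clo_eq step_def rule_def nW_def allv_def allvl_def)
  have c55: "r {Wv 3, Wv 4, Sv 1 4, Sv 2 4, Sv 3 1, Sv 3 2, Sv 3 4, Sv 3 5, Sv 4 1, Sv 4 2, Sv 4 3, Sv 4 5, Sv 5 4} + r {Sv 1 4, Sv 5 4} \<le> r {Wv 3, Sv 1 4, Sv 3 1, Sv 3 2, Sv 3 4, Sv 3 5, Sv 5 4} + r {Sv 1 4, Sv 2 4, Sv 5 4}"
    by (rule sub_r) (simp_all add: clo_eq step_def rule_def nW_def allv_def allvl_def)
  have c56: "r {Wv 1, Wv 4, Sv 1 2, Sv 1 3, Sv 1 4, Sv 1 5, Sv 2 1, Sv 3 1, Sv 4 1, Sv 4 2, Sv 4 3, Sv 4 5, Sv 5 1} + r {Sv 3 1, Sv 5 1} \<le> r {Wv 4, Sv 3 1, Sv 4 1, Sv 4 2, Sv 4 3, Sv 4 5, Sv 5 1} + r {Sv 2 1, Sv 3 1, Sv 5 1}"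
    by (rule sub_r) (simp_all add: clo_eq step_def rule_def nW_def allv_def allvl_def)
  have c57a: "r {Wv 1, Sv 1 2, Sv 1 3, Sv 1 4, Sv 1 5} \<le> r {Wv 1}"
    by (rule mono_r) (simp_all add: clo_eq step_def rule_def nW_def allv_def allvl_def)
  have c57: "r {Wv 1, Sv 1 2, Sv 1 3, Sv 1 4, Sv 1 5} \<le> \<alpha>"
    using c57a r_W[of 1] by simp
  have c58a: "r {Wv 2, Sv 2 1, Sv 2 3, Sv 2 4, Sv 2 5} \<le> r {Wv 2}"
    by (rule mono_r) (simp_all add: clo_eq step_def rule_def nW_def allv_def allvl_def)
  have c58: "r {Wv 2, Sv 2 1, Sv 2 3, Sv 2 4, Sv 2 5} \<le> \<alpha>"
    using c58a r_W[of 2] by simp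
  have c59a: "r {Wv 3, Sv 3 1, Sv 3 2, Sv 3 4, Sv 3 5} \<le> r {Wv 3}"
    by (rule mono_r) (simp_all add: clo_eq step_def rule_def nW_def allv_def allvl_def)
  have c59: "r {Wv 3, Sv 3 1, Sv 3 2, Sv 3 4, Sv 3 5} \<le> \<alpha>"
    using c59a r_W[of 3] by simp
  have c60a: "r {Wv 4, Sv 4 1, Sv 4 2, Sv 4 3, Sv 4 5} \<le> r {Wv 4}"
    by (rule mono_r) (simp_all add: clo_eq step_def rule_def nW_def allv_def allvl_def)
  have c60: "r {Wv 4, Sv 4 1, Sv 4 2, Sv 4 3, Sv 4 5} \<le> \<alpha>"
    using c60a r_W[of 4] by simp
  have c61a: "r {Wv 5, Sv 5 1, Sv 5 2, Sv 5 3, Sv 5 4} \<le> r {Wv 5}"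
    by (rule mono_r) (simp_all add: clo_eq step_def rule_def nW_def allv_def allvl_def)
  have c61: "r {Wv 5, Sv 5 1, Sv 5 2, Sv 5 3, Sv 5 4} \<le> \<alpha>"
    using c61a r_W[of 5] by simp
  have c62: "r {Sv 1 4} \<le> \<beta>"
    using r_S[of 1 4] by simp
  have c63: "r {Sv 2 1} \<le> \<beta>"
    using r_S[of 2 1] by simp
  have c64: "r {Sv 2 3} \<le> \<beta>"
    using r_S[of 2 3] by simp
  have c65: "r {Sv 2 4} \<le> \<beta>"
    using r_S[of 2 4] by simp
  have c66: "r {Sv 2 5} \<le> \<beta>"
    using r_S[of 2 5] by simp
  have c67: "r {Sv 3 1} \<le> \<beta>"
    using r_S[of 3 1] by simp
  have c68: "r {Sv 3 2} \<le> \<beta>"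
    using r_S[of 3 2] by simp
  have c69: "r {Sv 3 4} \<le> \<beta>"
    using r_S[of 3 4] by simp
  have c70: "r {Sv 5 1} \<le> \<beta>"
    using r_S[of 5 1] by simp
  have c71: "r {Sv 5 2} \<le> \<beta>"
    using r_S[of 5 2] by simp
  have c72: "r {Sv 5 3} \<le> \<beta>"
    using r_S[of 5 3] by simp
  have c73: "r {Sv 5 4} \<le> \<beta>"
    using r_S[of 5 4] by simp
  have e0: "0 \<le> r {}" by (rule r_nn)
  have eB: "r allv = B" by (rule r_all)
  show ?thesis using c0 c1 c2 c3 c4 c5 c6 c7 c8 c9 c10 c11 c12 c13 c14 c15 c16 c17 c18 c19 c20 c21 c22 c23 c24 c25 c26 c27 c28 c29 c30 c31 c32 c33 c34 c35 c36 c37 c38 c39 c40 c41 c42 c43 c44 c45 c46 c47 c48 c49 c50 c51 c52 c53 c54 c55 c56 c57 c58 c59 c60 c61 c62 c63 c64 c65 c66 c67 c68 c69 c70 c71 c72 c73 e0 eB by linarith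
qed
end

theorem mainTheorem11:
  fixes p :: "'o pmf" and M :: "'o \<Rightarrow> 'm" and W :: "nat \<Rightarrow> 'o \<Rightarrow> 'w"
    and S :: "nat \<Rightarrow> nat \<Rightarrow> 'o \<Rightarrow> 's" and B \<alpha> \<beta> :: real
  assumes "regen_code 5 4 4 p M W S B \<alpha> \<beta>"
  shows "5 * B \<le> 7 * \<alpha> + 22 * \<beta>"
proof -
  interpret rc p M W S B \<alpha> \<beta> by (rule rc.intro) (rule assms)
  show ?thesis by (rule cert)
qed

end
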